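(* Let $\alpha\in[0,1)$, $t\ge2$, and $2=m_1=\cdots=m_s<m_{s+1}\le\cdots\le m_t$ (with $0\le s\le t$). Let $\widehat\infty[m_1,\dots,m_t]\in\mathcal{G}_n^m$ be a digraph whose strong component is $\infty[m_1,\dots,m_t]$, with $m=\sum_{i=1}^t m_i-t+1$ and common vertex $v$. Then $$\alpha^2(m-1+t^2)+\alpha^2(n-m)+2s(1-\alpha)^2\le E_\alpha(\widehat\infty[m_1,\dots,m_t])\le\alpha^2(n-m+t)^2+\alpha^2(m-1)+2s(1-\alpha)^2.$$ For $\alpha\in(0,1)$, the lower bound is attained if and only if each hanging tree is an in-tree rooted at its vertex of $\infty[m_1,\dots,m_t]$, and the upper bound is attained if and only if all $n-m$ vertices outside $\infty[m_1,\dots,m_t]$ are leaves of a single out-star centred at $v$.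
   Context: Digraphs are finite without loops or multiple arcs. A directed cycle $C_k$ ($k\ge2$) is $w_1\to\cdots\to w_k\to w_1$. The generalized $\infty$-digraph $\infty[m_1,\dots,m_t]$ ($m_i\ge2$) consists of $t$ directed cycles $C_{m_1},\dots,C_{m_t}$ sharing exactly one common vertex $v$ and otherwise vertex-disjoint; it has $\sum m_i-t+1$ vertices. $A_\alpha(G)=\alpha D^+(G)+(1-\alpha)A(G)$, with $A(G)$ the adjacency matrix and $D^+(G)$ the diagonal outdegree matrix. $E_\alpha(G)=\sum_i\lambda_{\alpha i}^2$ is the sum of squares of all eigenvalues of $A_\alpha(G)$ with multiplicity. A directed tree is a digraph whose underlying graph is a tree (a single vertex allowed); an in-tree is a directed tree with all outdegrees at most $1$, its root being the vertex of outdegree $0$. The class $\mathcal{G}_n^m$ ($2\le m\le n$): $G\in\mathcal{G}_n^m$ consists of a strongly connected digraph $G^*$ on $m$ vertices $v_1,\dots,v_m$ together with directed trees $T^{(1)},\dots,T^{(m)}$, where $T^{(i)}$ has $n_i\ge1$ vertices including $v_i$, the sets $\mathcal{V}(T^{(i)})$ are pairwise disjoint, $\mathcal{V}(T^{(i)})\cap\mathcal{V}(G^* )=\{v_i\}$, $n=\sum_i n_i$, and the arcs of $G$ are those of $G^*$ and of the $T^{(i)}$. *)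

theory Defs
  imports "Jordan_Normal_Form.Char_Poly"
begin

definition digraph :: "nat \<Rightarrow> (nat \<times> nat) set \<Rightarrow> bool" where
  "digraph n A \<longleftrightarrow> A \<subseteq> {0..<n} \<times> {0..<n} \<and> (\<forall>i. (i, i) \<notin> A)"

definition outdeg :: "(nat \<times> nat) set \<Rightarrow> nat \<Rightarrow> nat" where
  "outdeg A i = card {j. (i, j) \<in> A}"

definition A_alpha :: "real \<Rightarrow> nat \<Rightarrow> (nat \<times> nat) set \<Rightarrow> complex mat" where
  "A_alpha \<alpha> n A = mat n n (\<lambda>(i, j). complex_of_real
      ((if i = j then \<alpha> * real (outdeg A i) else 0) + (1 - \<alpha>) * (if (i, j) \<in> A then 1 else 0)))"

definition E_alpha :: "real \<Rightarrow> nat \<Rightarrow> (nat \<times> nat) set \<Rightarrow> complex" where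
  "E_alpha \<alpha> n A = (let p = char_poly (A_alpha \<alpha> n A) in
      (\<Sum>z\<in>{z. poly p z = 0}. of_nat (order z p) * z ^ 2))"

definition cycle_arcs :: "nat list \<Rightarrow> (nat \<times> nat) set" where
  "cycle_arcs c = {(c ! j, c ! (Suc j mod length c)) | j. j < length c}"

definition is_infty_digraph :: "nat list \<Rightarrow> nat \<Rightarrow> nat set \<Rightarrow> (nat \<times> nat) set \<Rightarrow> bool" where
  "is_infty_digraph ms v S B \<longleftrightarrow>
     (\<exists>cs :: nat list list. length cs = length ms \<and>
        (\<forall>i<length ms. length (cs ! i) = ms ! i \<and> distinct (cs ! i) \<and> hd (cs ! i) = v) \<and>
        (\<forall>i<length ms. \<forall>j<length ms. i \<noteq> j \<longrightarrow> set (cs ! i) \<inter> set (cs ! j) = {v}) \<and>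
        S = (\<Union>i<length ms. set (cs ! i)) \<and>
        B = (\<Union>i<length ms. cycle_arcs (cs ! i)))"

definition directed_tree :: "nat set \<Rightarrow> (nat \<times> nat) set \<Rightarrow> bool" where
  "directed_tree W B \<longleftrightarrow> finite W \<and> W \<noteq> {} \<and> B \<subseteq> W \<times> W \<and> card B + 1 = card W \<and>
     (\<forall>x\<in>W. \<forall>y\<in>W. (x, y) \<in> (B \<union> B\<inverse>)\<^sup>*)"

definition in_tree_rooted :: "nat set \<Rightarrow> (nat \<times> nat) set \<Rightarrow> nat \<Rightarrow> bool" where
  "in_tree_rooted W B r \<longleftrightarrow> directed_tree W B \<and> r \<in> W \<and> (\<forall>x\<in>W. outdeg B x \<le> 1) \<and> outdeg B r = 0"

text \<open>Membership in the class G_n^m: the strong component G* lives on S (m = card S vertices),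
  and T u is the vertex set of the hanging tree T^(u) at u in S; its arcs are the arcs of G inside T u.\<close>

definition in_class_G :: "nat \<Rightarrow> nat \<Rightarrow> (nat \<times> nat) set \<Rightarrow> nat set \<Rightarrow> (nat \<Rightarrow> nat set) \<Rightarrow> bool" where
  "in_class_G n m A S T \<longleftrightarrow>
     digraph n A \<and> 2 \<le> m \<and> m \<le> n \<and> S \<subseteq> {0..<n} \<and> card S = m \<and>
     (\<forall>x\<in>S. \<forall>y\<in>S. (x, y) \<in> (A \<inter> S \<times> S)\<^sup>*) \<and>
     (\<forall>u\<in>S. directed_tree (T u) (A \<inter> T u \<times> T u) \<and> T u \<inter> S = {u}) \<and>
     (\<forall>u\<in>S. \<forall>w\<in>S. u \<noteq> w \<longrightarrow> T u \<inter> T w = {}) \<and>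
     (\<Union>u\<in>S. T u) = {0..<n} \<and>
     A = (A \<inter> S \<times> S) \<union> (\<Union>u\<in>S. A \<inter> T u \<times> T u)"

end

theory Submission
  imports Defs "Jordan_Normal_Form.Schur_Decomposition"
begin


definition trsq :: "nat \<Rightarrow> 'a::comm_semiring_1 mat \<Rightarrow> 'a" where
  "trsq n M = (\<Sum>i<n. \<Sum>j<n. M$$(i,j) * M$$(j,i))"

definition tr :: "nat \<Rightarrow> 'a::comm_semiring_1 mat \<Rightarrow> 'a" where
  "tr n M = (\<Sum>i<n. M$$(i,i))"

lemma tr_comm:
  assumes "X \<in> carrier_mat n n" "Y \<in> carrier_mat n n"
  shows "tr n (X * Y) = tr n (Y * X)"
proof -
  have "tr n (X * Y) = (\<Sum>i<n. \<Sum>k<n. X$$(i,k) * Y$$(k,i))"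
    using assms by (auto simp: tr_def scalar_prod_def atLeast0LessThan intro!: sum.cong)
  also have "\<dots> = (\<Sum>k<n. \<Sum>i<n. Y$$(k,i) * X$$(i,k))"
    by (subst sum.swap) (simp add: mult.commute)
  also have "\<dots> = tr n (Y * X)"
    using assms by (auto simp: tr_def scalar_prod_def atLeast0LessThan intro!: sum.cong)
  finally show ?thesis .
qed

lemma trsq_tr:
  assumes "X \<in> carrier_mat n n"
  shows "trsq n X = tr n (X * X)"
  using assms by (auto simp: tr_def trsq_def scalar_prod_def atLeast0LessThan intro!: sum.cong)

lemma trsq_similar:
  assumes P: "P \<in> carrier_mat n n" and B: "B \<in> carrier_mat n n" and Q: "Q \<in> carrier_mat n n"
    and QP: "Q * P = 1\<^sub>m n"
  shows "trsq n (P * B * Q) = trsq n B"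
proof -
  have "(P * B * Q) * (P * B * Q) = P * ((B * B) * Q)"
  proof -
    have "(P * B * Q) * (P * B * Q) = P * (B * (Q * P) * (B * Q))"
      using P B Q by (simp add: assoc_mult_mat[of _ n n _ n _ n])
    also have "\<dots> = P * (B * (B * Q))" using QP B Q by simp
    also have "\<dots> = P * ((B * B) * Q)" using B Q by (simp add: assoc_mult_mat[of _ n n _ n _ n])
    finally show ?thesis .
  qed
  then have "trsq n (P * B * Q) = tr n (P * ((B * B) * Q))"
    using P B Q by (simp add: trsq_tr)
  also have "\<dots> = tr n (((B * B) * Q) * P)" using P B Q by (intro tr_comm) auto
  also have "\<dots> = tr n (B * B)" using P B Q QP by (simp add: assoc_mult_mat[of _ n n _ n _ n])
  also have "\<dots> = trsq n B" using B by (simp add: trsq_tr)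
  finally show ?thesis .
qed

lemma trsq_upper:
  assumes B: "B \<in> carrier_mat n n" and U: "upper_triangular B"
  shows "trsq n B = (\<Sum>i<n. B$$(i,i)^2)"
  unfolding trsq_def
proof (rule sum.cong[OF refl])
  fix i assume i: "i \<in> {..<n}"
  have "(\<Sum>j<n. B$$(i,j) * B$$(j,i)) = (\<Sum>j<n. if j = i then B$$(i,i)^2 else 0)"
  proof (rule sum.cong[OF refl])
    fix j assume j: "j \<in> {..<n}"
    show "B$$(i,j) * B$$(j,i) = (if j = i then B$$(i,i)^2 else 0)"
    proof (cases "j < i")
      case True then show ?thesis using U B i by (auto simp: upper_triangular_def)
    next
      case False
      then show ?thesis using U B j by (cases "j = i") (auto simp: upper_triangular_def power2_eq_square)
    qed
  qed
  also have "\<dots> = B$$(i,i)^2" using i by simp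
  finally show "(\<Sum>j<n. B$$(i,j) * B$$(j,i)) = B$$(i,i)^2" .
qed

lemma order_linear_prod:
  fixes es :: "'a::idom list"
  shows "Polynomial.order z (\<Prod>e\<leftarrow>es. [:- e, 1:]) = count_list es z"
proof (induction es)
  case Nil then show ?case by simp
next
  case (Cons e es)
  have nz: "(\<Prod>e\<leftarrow>es. [:- e, 1:]) \<noteq> (0::'a poly)"
    by (auto simp: prod_list_zero_iff)
  have "Polynomial.order z ([:- e, 1:] * (\<Prod>e\<leftarrow>es. [:- e, 1:])) = Polynomial.order z [:- e, 1:] + Polynomial.order z (\<Prod>e\<leftarrow>es. [:- e, 1:])"
    using nz by (intro order_mult) (metis mult_eq_0_iff pCons_eq_0_iff one_neq_zero)
  moreover have "Polynomial.order z [:- e, 1:] = (if z = e then 1 else 0)"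
  proof (cases "z = e")
    case True then show ?thesis using order_power_n_n[of z 1] by simp
  next
    case False then show ?thesis by (simp add: order_0I)
  qed
  ultimately show ?case using Cons by simp
qed

lemma sum_count_gen:
  fixes f :: "'b \<Rightarrow> 'a::comm_semiring_1"
  shows "(\<Sum>z\<in>set es. of_nat (count_list es z) * f z) = sum_list (map f es)"
proof (induction es)
  case Nil then show ?case by simp
next
  case (Cons x xs)
  show ?case
  proof (cases "x \<in> set xs")
    case True
    have "(\<Sum>z\<in>set (x#xs). of_nat (count_list (x#xs) z) * f z)
        = (\<Sum>z\<in>set xs. of_nat (count_list xs z) * f z + (if z = x then f z else 0))"
    proof -
      have "set (x#xs) = set xs" using True by auto
      then show ?thesis by (simp only:) (rule sum.cong, auto simp: algebra_simps)
    qed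
    also have "\<dots> = (\<Sum>z\<in>set xs. of_nat (count_list xs z) * f z) + (\<Sum>z\<in>set xs. (if z = x then f z else 0))"
      by (simp add: sum.distrib)
    also have "(\<Sum>z\<in>set xs. (if z = x then f z else 0)) = f x"
      using True by (simp add: sum.delta')
    finally show ?thesis using Cons by (simp add: add.commute)
  next
    case False
    have "(\<Sum>z\<in>set xs. of_nat (count_list (x#xs) z) * f z) = (\<Sum>z\<in>set xs. of_nat (count_list xs z) * f z)"
      using False by (intro sum.cong) auto
    then show ?thesis using False Cons by simp
  qed
qed

lemma roots_linear_prod:
  fixes es :: "'a::idom list"
  shows "{z. poly (\<Prod>e\<leftarrow>es. [:- e, 1:]) z = 0} = set es"
  by (induction es) (auto simp: poly_prod_list)

lemma sum_roots_sq:
  fixes M :: "complex mat"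
  assumes M: "M \<in> carrier_mat n n"
  shows "(let p = char_poly M in (\<Sum>z\<in>{z. poly p z = 0}. of_nat (Polynomial.order z p) * z ^ 2)) = trsq n M"
proof -
  obtain es where es: "char_poly M = (\<Prod>a\<leftarrow>es. [:- a, 1:])" "length es = n"
    using char_poly_factorized[OF M] by blast
  obtain B P Q where sd: "schur_decomposition M es = (B,P,Q)" by (cases "schur_decomposition M es") auto
  from schur_decomposition[OF M es(1) sd]
  have sim: "similar_mat_wit M B P Q" and U: "upper_triangular B" and D: "diag_mat B = es" by auto
  from similar_mat_witD2[OF M sim]
  have B: "B \<in> carrier_mat n n" and P: "P \<in> carrier_mat n n" and Q: "Q \<in> carrier_mat n n"
    and QP: "Q * P = 1\<^sub>m n" and MPBQ: "M = P * B * Q" by auto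
  have "(let p = char_poly M in (\<Sum>z\<in>{z. poly p z = 0}. of_nat (Polynomial.order z p) * z ^ 2))
      = (\<Sum>z\<in>set es. of_nat (count_list es z) * z ^ 2)"
    unfolding Let_def es(1) roots_linear_prod order_linear_prod ..
  also have "\<dots> = sum_list (map (\<lambda>z. z^2) es)"
    by (rule sum_count_gen)
  also have "\<dots> = (\<Sum>i<n. B$$(i,i)^2)"
    using D B by (auto simp: diag_mat_def sum_list_sum_nth atLeast0LessThan)
  also have "\<dots> = trsq n M" using MPBQ trsq_similar[OF P B Q QP] trsq_upper[OF B U] by simp
  finally show ?thesis .
qed

lemma card_pairs_sum:
  fixes n :: nat
  assumes "X \<subseteq> {..<n} \<times> {..<n}"
  shows "real (card X) = (\<Sum>i<n. \<Sum>j<n. if (i,j) \<in> X then 1 else 0)"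
proof -
  have X: "X = (SIGMA i:{..<n}. {j\<in>{..<n}. (i,j) \<in> X})" using assms by auto
  have "card X = (\<Sum>i<n. card {j\<in>{..<n}. (i,j) \<in> X})"
  proof -
    have "card (SIGMA i:{..<n}. {j\<in>{..<n}. (i,j) \<in> X}) = (\<Sum>i<n. card {j\<in>{..<n}. (i,j) \<in> X})"
      by (rule card_SigmaI) auto
    then show ?thesis using X by metis
  qed
  then have "real (card X) = (\<Sum>i<n. real (card {j\<in>{..<n}. (i,j) \<in> X}))" by simp
  also have "\<dots> = (\<Sum>i<n. \<Sum>j<n. if (i,j) \<in> X then 1 else 0)"
  proof (intro sum.cong refl)
    fix i
    have "(\<Sum>j<n. if (i,j) \<in> X then 1 else 0) = (\<Sum>j\<in>{j\<in>{..<n}. (i,j) \<in> X}. (1::real))"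
      by (rule sum.inter_filter[symmetric]) simp
    then show "real (card {j\<in>{..<n}. (i,j) \<in> X}) = (\<Sum>j<n. if (i,j) \<in> X then 1 else 0)" by simp
  qed
  finally show ?thesis .
qed

lemma trsq_A_alpha:
  assumes dg: "digraph n A"
  shows "trsq n (A_alpha \<alpha> n A) = complex_of_real (\<alpha>^2 * (\<Sum>i<n. (real (outdeg A i))^2)
           + (1-\<alpha>)^2 * real (card {p\<in>A. (snd p, fst p)\<in>A}))"
proof -
  define f where "f i j = (if i = j then \<alpha> * real (outdeg A i) else 0) + (1 - \<alpha>) * (if (i,j)\<in>A then 1 else 0)" for i j
  define ind where "ind i j = (if (i,j) \<in> {p\<in>A. (snd p, fst p)\<in>A} then 1 else 0 :: real)" for i j
  have loop: "\<And>i. (i,i) \<notin> A" using dg by (simp add: digraph_def)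
  have Asub: "A \<subseteq> {..<n} \<times> {..<n}" using dg by (auto simp: digraph_def)
  have fij: "f i j * f j i = (if j = i then \<alpha>^2 * (real(outdeg A i))^2 else 0) + (1-\<alpha>)^2 * ind i j" for i j
    using loop by (auto simp: f_def ind_def power2_eq_square)
  have "trsq n (A_alpha \<alpha> n A) = (\<Sum>i<n. \<Sum>j<n. complex_of_real (f i j * f j i))"
    unfolding trsq_def by (intro sum.cong refl) (simp add: A_alpha_def f_def)
  also have "\<dots> = complex_of_real (\<Sum>i<n. \<Sum>j<n. f i j * f j i)" by simp
  also have "(\<Sum>i<n. \<Sum>j<n. f i j * f j i) = (\<Sum>i<n. \<alpha>^2 * (real(outdeg A i))^2 + (1-\<alpha>)^2 * (\<Sum>j<n. ind i j))"
    unfolding fij by (intro sum.cong refl) (simp add: sum.distrib sum_distrib_left)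
  also have "\<dots> = \<alpha>^2 * (\<Sum>i<n. (real (outdeg A i))^2) + (1-\<alpha>)^2 * (\<Sum>i<n. \<Sum>j<n. ind i j)"
    by (simp add: sum.distrib sum_distrib_left)
  also have "(\<Sum>i<n. \<Sum>j<n. ind i j) = real (card {p\<in>A. (snd p, fst p)\<in>A})"
    unfolding ind_def by (rule card_pairs_sum[symmetric]) (use Asub in auto)
  finally show ?thesis .
qed



lemma sum_sq_le_sq_sum:
  fixes e :: "'a \<Rightarrow> nat"
  assumes "finite V"
  shows "(\<Sum>x\<in>V. (e x)^2) \<le> (\<Sum>x\<in>V. e x)^2"
  using assms
proof (induction V rule: finite_induct)
  case empty then show ?case by simp
next
  case (insert a F)
  have "(\<Sum>x\<in>insert a F. (e x)^2) = (e a)^2 + (\<Sum>x\<in>F. (e x)^2)" using insert by simp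
  also have "\<dots> \<le> (e a)^2 + (\<Sum>x\<in>F. e x)^2" using insert by simp
  also have "\<dots> \<le> (e a + (\<Sum>x\<in>F. e x))^2" by (simp add: power2_sum)
  also have "\<dots> = (\<Sum>x\<in>insert a F. e x)^2" using insert by simp
  finally show ?case .
qed

lemma sum_c_sq:
  fixes c :: "nat \<Rightarrow> nat"
  assumes V: "finite V" and SV: "S \<subseteq> V" and vS: "v \<in> S" and cS: "card S = m"
    and cv: "c v = t" and c1: "\<forall>x\<in>S-{v}. c x = 1" and c0: "\<forall>x\<in>V-S. c x = 0"
  shows "(\<Sum>x\<in>V. (c x)^2) = t^2 + (m - 1)"
proof -
  have fS: "finite S" using V SV finite_subset by blast
  have "(\<Sum>x\<in>V. (c x)^2) = (\<Sum>x\<in>S. (c x)^2) + (\<Sum>x\<in>V-S. (c x)^2)"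
    using V SV by (metis sum.subset_diff add.commute)
  also have "(\<Sum>x\<in>V-S. (c x)^2) = 0" using c0 by simp
  also have "(\<Sum>x\<in>S. (c x)^2) = (c v)^2 + (\<Sum>x\<in>S-{v}. (c x)^2)"
    using fS vS by (simp add: sum.remove)
  also have "(\<Sum>x\<in>S-{v}. (c x)^2) = (\<Sum>x\<in>S-{v}. 1)" using c1 by simp
  also have "\<dots> = m - 1" using cS fS vS by simp
  finally show ?thesis using cv by simp
qed

lemma arith_lower:
  fixes c e :: "nat \<Rightarrow> nat"
  assumes V: "finite V" and SV: "S \<subseteq> V" and vS: "v \<in> S" and cS: "card S = m"
    and cv: "c v = t" and c1: "\<forall>x\<in>S-{v}. c x = 1" and c0: "\<forall>x\<in>V-S. c x = 0" and t: "2 \<le> t"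
  shows "(\<Sum>x\<in>V. (c x + e x)^2) = t^2 + (m - 1) + (\<Sum>x\<in>V. e x)
            + (\<Sum>x\<in>V. 2 * c x * e x + e x * (e x - 1))"
proof -
  have "(\<Sum>x\<in>V. (c x + e x)^2) = (\<Sum>x\<in>V. (c x)^2 + e x + (2 * c x * e x + e x * (e x - 1)))"
  proof (rule sum.cong[OF refl])
    fix x
    show "(c x + e x)^2 = (c x)^2 + e x + (2 * c x * e x + e x * (e x - 1))"
      by (cases "e x") (auto simp: power2_eq_square algebra_simps)
  qed
  also have "\<dots> = (\<Sum>x\<in>V. (c x)^2) + (\<Sum>x\<in>V. e x) + (\<Sum>x\<in>V. 2 * c x * e x + e x * (e x - 1))"
    by (simp add: sum.distrib)
  finally show ?thesis using sum_c_sq[OF assms(1-7)] by simp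
qed

lemma arith_upper:
  fixes c e :: "nat \<Rightarrow> nat"
  assumes V: "finite V" and SV: "S \<subseteq> V" and vS: "v \<in> S" and cS: "card S = m"
    and cv: "c v = t" and c1: "\<forall>x\<in>S-{v}. c x = 1" and c0: "\<forall>x\<in>V-S. c x = 0" and t: "2 \<le> t"
  shows "(\<Sum>x\<in>V. (c x + e x)^2) \<le> ((\<Sum>x\<in>V. e x) + t)^2 + (m - 1)"
    and "(\<Sum>x\<in>V. (c x + e x)^2) = ((\<Sum>x\<in>V. e x) + t)^2 + (m - 1) \<longleftrightarrow> e v = (\<Sum>x\<in>V. e x)"
proof -
  have fS: "finite S" using V SV finite_subset by blast
  have vV: "v \<in> V" using vS SV by auto
  define W where "W = V - {v}"
  have fW: "finite W" using V W_def by simp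
  define L where "L = (\<Sum>x\<in>W. e x)"
  have sV: "\<And>f :: nat \<Rightarrow> nat. (\<Sum>x\<in>V. f x) = f v + (\<Sum>x\<in>W. f x)"
    using V vV W_def by (simp add: sum.remove)
  have K: "(\<Sum>x\<in>V. e x) = e v + L" using sV L_def by simp
  have cle: "\<forall>x\<in>W. c x \<le> 1" using c1 c0 W_def by (metis DiffD1 DiffD2 DiffI le_refl zero_le_one)
  have cW: "(\<Sum>x\<in>W. c x) = m - 1"
  proof -
    have "(\<Sum>x\<in>W. c x) = (\<Sum>x\<in>S-{v}. c x) + (\<Sum>x\<in>V-S. c x)"
    proof -
      have "W = (S - {v}) \<union> (V - S)" using W_def SV vS by auto
      then show ?thesis using V fS by (simp add: sum.union_disjoint Diff_Int_distrib2)
    qed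
    also have "\<dots> = m - 1" using c1 c0 cS fS vS by simp
    finally show ?thesis .
  qed
  have termb: "\<forall>x\<in>W. (c x + e x)^2 \<le> c x + 2 * e x + (e x)^2"
  proof
    fix x assume "x \<in> W"
    then have "c x = 0 \<or> c x = 1" using cle by auto
    then show "(c x + e x)^2 \<le> c x + 2 * e x + (e x)^2"
      by (auto simp: power2_eq_square algebra_simps)
  qed
  have "(\<Sum>x\<in>W. (c x + e x)^2) \<le> (\<Sum>x\<in>W. c x + 2 * e x + (e x)^2)"
    using termb by (intro sum_mono) auto
  also have "\<dots> = (m - 1) + 2 * L + (\<Sum>x\<in>W. (e x)^2)"
    using cW L_def by (simp add: sum.distrib sum_distrib_left)
  also have "\<dots> \<le> (m - 1) + 2 * L + L^2"
    using sum_sq_le_sq_sum[OF fW, of e] L_def by simp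
  finally have WL: "(\<Sum>x\<in>W. (c x + e x)^2) \<le> (m - 1) + 2 * L + L^2" .
  have tot: "(\<Sum>x\<in>V. (c x + e x)^2) \<le> (t + e v)^2 + (m - 1) + 2 * L + L^2"
    using WL sV[of "\<lambda>x. (c x + e x)^2"] cv by simp
  have sq: "((\<Sum>x\<in>V. e x) + t)^2 = (t + e v)^2 + 2 * (t + e v) * L + L^2"
    unfolding K by (simp add: power2_eq_square algebra_simps)
  have key: "2 * L \<le> 2 * (t + e v) * L" using t by simp
  show up: "(\<Sum>x\<in>V. (c x + e x)^2) \<le> ((\<Sum>x\<in>V. e x) + t)^2 + (m - 1)"
    using tot sq key K by linarith
  show "(\<Sum>x\<in>V. (c x + e x)^2) = ((\<Sum>x\<in>V. e x) + t)^2 + (m - 1) \<longleftrightarrow> e v = (\<Sum>x\<in>V. e x)"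
  proof
    assume eq: "(\<Sum>x\<in>V. (c x + e x)^2) = ((\<Sum>x\<in>V. e x) + t)^2 + (m - 1)"
    show "e v = (\<Sum>x\<in>V. e x)"
    proof (rule ccontr)
      assume "e v \<noteq> (\<Sum>x\<in>V. e x)"
      then have "L > 0" using K by simp
      then have "2 * L < 2 * (t + e v) * L" using t by simp
      then show False using tot sq eq K by linarith
    qed
  next
    assume "e v = (\<Sum>x\<in>V. e x)"
    then have L0: "L = 0" using K by simp
    then have "\<forall>x\<in>W. e x = 0" using L_def fW by simp
    then have "(\<Sum>x\<in>W. (c x + e x)^2) = (\<Sum>x\<in>W. c x)"
      using cle by (intro sum.cong) (auto simp: power2_eq_square le_Suc_eq)
    then have "(\<Sum>x\<in>V. (c x + e x)^2) = (t + e v)^2 + (m - 1)"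
      using sV[of "\<lambda>x. (c x + e x)^2"] cv cW by simp
    then show "(\<Sum>x\<in>V. (c x + e x)^2) = ((\<Sum>x\<in>V. e x) + t)^2 + (m - 1)"
      using K L0 by (simp add: add.commute)
  qed
qed



definition reach :: "('a \<times> 'a) set \<Rightarrow> 'a set \<Rightarrow> 'a set" where
  "reach B X = {y. \<exists>x\<in>X. (x,y) \<in> (B \<union> B\<inverse>)\<^sup>*}"

lemma reach_closed:
  assumes "X \<subseteq> Y" "\<And>y z. y \<in> Y \<Longrightarrow> (y,z) \<in> R \<Longrightarrow> z \<in> Y"
  shows "{y. \<exists>x\<in>X. (x,y) \<in> R\<^sup>*} \<subseteq> Y"
proof
  fix y assume "y \<in> {y. \<exists>x\<in>X. (x,y) \<in> R\<^sup>*}"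
  then obtain x where x: "x \<in> X" "(x,y) \<in> R\<^sup>*" by auto
  from x(2) show "y \<in> Y"
    by (induction rule: rtrancl_induct) (use x(1) assms in auto)
qed

lemma reach_sub: "reach B X \<subseteq> X \<union> Field B"
proof
  fix y assume "y \<in> reach B X"
  then obtain x where x: "x \<in> X" "(x,y) \<in> (B \<union> B\<inverse>)\<^sup>*" by (auto simp: reach_def)
  from x(2) show "y \<in> X \<union> Field B"
  proof (induction rule: rtrancl_induct)
    case base then show ?case using x(1) by blast
  next
    case (step y z)
    then have "(y,z) \<in> B \<or> (z,y) \<in> B" by blast
    then show ?case by (meson FieldI1 FieldI2 UnI2)
  qed
qed

lemma reach_finite: "finite B \<Longrightarrow> finite X \<Longrightarrow> finite (reach B X)"
  using reach_sub[of B X] by (meson finite_Un finite_Field finite_subset)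

lemma reach_mono_base: "X \<subseteq> reach B X"
  by (auto simp: reach_def)

lemma reach_mono: "X \<subseteq> Y \<Longrightarrow> reach F X \<subseteq> reach F Y"
  unfolding reach_def by blast

lemma reach_card:
  assumes "finite B"
  shows "finite X \<Longrightarrow> card (reach B X) \<le> card X + card B"
  using assms
proof (induction B arbitrary: X rule: finite_induct)
  case empty
  then show ?case by (simp add: reach_def)
next
  case (insert e F X)
  obtain a b where e: "e = (a,b)" by (cases e)
  let ?R = "insert e F \<union> (insert e F)\<inverse>"
  have stepR: "\<And>y z. (y,z) \<in> ?R \<Longrightarrow> (y,z) \<in> F \<union> F\<inverse> \<or> (y,z) = (a,b) \<or> (y,z) = (b,a)"
    using e by auto
  have closedF: "\<And>Z y z. y \<in> reach F Z \<Longrightarrow> (y,z) \<in> F \<union> F\<inverse> \<Longrightarrow> z \<in> reach F Z"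
    unfolding reach_def by (blast intro: rtrancl_into_rtrancl)
  show ?case
  proof (cases "a \<in> reach F X")
    case True
    let ?Y = "reach F (insert b X)"
    have "reach (insert e F) X \<subseteq> ?Y"
      unfolding reach_def[of "insert e F"]
    proof (rule reach_closed)
      show "X \<subseteq> ?Y" using reach_mono_base[of "insert _ X" F] by (meson subset_insertI subset_trans)
      fix y z assume y: "y \<in> ?Y" and yz: "(y,z) \<in> ?R"
      from stepR[OF yz] show "z \<in> ?Y"
      proof (elim disjE)
        assume "(y,z) \<in> F \<union> F\<inverse>" then show ?thesis using closedF[OF y] by simp
      next
        assume "(y,z) = (a,b)" then have "z = b" by simp
        then show ?thesis using reach_mono_base[of "insert b X" F] by simp
      next
        assume "(y,z) = (b,a)"
        then have "z = a" by simp
        then show ?thesis using True reach_mono[of X "insert b X" F] by blast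
      qed
    qed
    then have "card (reach (insert e F) X) \<le> card ?Y"
      using card_mono[OF reach_finite[OF insert.hyps(1)]] insert.prems by simp
    also have "\<dots> \<le> card (insert b X) + card F" using insert.IH[of "insert b X"] insert.prems by simp
    also have "\<dots> \<le> card X + card (insert e F)" using insert.hyps insert.prems by (simp add: card_insert_if)
    finally show ?thesis .
  next
    case False
    note aF = False
    show ?thesis
    proof (cases "b \<in> reach F X")
      case True
      let ?Y = "reach F (insert a X)"
      have "reach (insert e F) X \<subseteq> ?Y"
        unfolding reach_def[of "insert e F"]
      proof (rule reach_closed)
        show "X \<subseteq> ?Y" using reach_mono_base[of "insert _ X" F] by (meson subset_insertI subset_trans)
        fix y z assume y: "y \<in> ?Y" and yz: "(y,z) \<in> ?R"
        from stepR[OF yz] show "z \<in> ?Y"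
        proof (elim disjE)
          assume "(y,z) \<in> F \<union> F\<inverse>" then show ?thesis using closedF[OF y] by simp
        next
          assume "(y,z) = (b,a)" then have "z = a" by simp
          then show ?thesis using reach_mono_base[of "insert a X" F] by simp
        next
          assume "(y,z) = (a,b)"
          then have "z = b" by simp
          then show ?thesis using True reach_mono[of X "insert a X" F] by blast
        qed
      qed
      then have "card (reach (insert e F) X) \<le> card ?Y"
        using card_mono[OF reach_finite[OF insert.hyps(1)]] insert.prems by simp
      also have "\<dots> \<le> card (insert a X) + card F" using insert.IH[of "insert a X"] insert.prems by simp
      also have "\<dots> \<le> card X + card (insert e F)" using insert.hyps insert.prems by (simp add: card_insert_if)
      finally show ?thesis .
    next
      case False
      let ?Y = "reach F X"
      have "reach (insert e F) X \<subseteq> ?Y"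
        unfolding reach_def[of "insert e F"]
      proof (rule reach_closed)
        show "X \<subseteq> ?Y" using reach_mono_base[of X F] by simp
        fix y z assume y: "y \<in> ?Y" and yz: "(y,z) \<in> ?R"
        from stepR[OF yz] show "z \<in> ?Y"
        proof (elim disjE)
          assume "(y,z) \<in> F \<union> F\<inverse>" then show ?thesis using closedF[OF y] by simp
        next
          assume "(y,z) = (b,a)" then have "y = b" by simp
          then show ?thesis using y False by simp
        next
          assume "(y,z) = (a,b)"
          then have "y = a" by simp
          then show ?thesis using y aF by simp
        qed
      qed
      then have "card (reach (insert e F) X) \<le> card ?Y"
        using card_mono[OF reach_finite[OF insert.hyps(1)]] insert.prems by simp
      also have "\<dots> \<le> card X + card F" using insert.IH[of X] insert.prems by simp
      also have "\<dots> \<le> card X + card (insert e F)" using insert.hyps insert.prems by (simp add: card_insert_if)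
      finally show ?thesis .
    qed
  qed
qed

lemma tree_no_digon:
  assumes T: "directed_tree W B" and xy: "(x,y) \<in> B" and yx: "(y,x) \<in> B"
  shows False
proof -
  from T have fW: "finite W" and ne: "W \<noteq> {}" and BW: "B \<subseteq> W \<times> W" and cB: "card B + 1 = card W"
    and con: "\<forall>a\<in>W. \<forall>b\<in>W. (a,b) \<in> (B \<union> B\<inverse>)\<^sup>*"
    by (auto simp: directed_tree_def)
  have fB: "finite B" using BW fW by (meson finite_SigmaI finite_subset)
  define B' where "B' = B - {(y,x)}"
  have sub: "B \<union> B\<inverse> \<subseteq> (B' \<union> B'\<inverse>)\<^sup>*"
  proof
    fix p assume p: "p \<in> B \<union> B\<inverse>"
    show "p \<in> (B' \<union> B'\<inverse>)\<^sup>*"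
    proof (cases "p = (y,x) \<or> p = (x,y)")
      case True
      then show ?thesis
      proof
        assume "p = (y,x)"
        then show ?thesis using xy by (cases "x = y") (auto simp: B'_def)
      next
        assume "p = (x,y)"
        then show ?thesis using xy by (cases "x = y") (auto simp: B'_def)
      qed
    next
      case False
      then show ?thesis using p by (auto simp: B'_def)
    qed
  qed
  have rt: "(B \<union> B\<inverse>)\<^sup>* \<subseteq> (B' \<union> B'\<inverse>)\<^sup>*"
    using rtrancl_subset_rtrancl[OF sub] by simp
  obtain r where r: "r \<in> W" using ne by auto
  have "W \<subseteq> reach B' {r}" using con r rt by (auto simp: reach_def)
  then have "card W \<le> card (reach B' {r})"
    by (intro card_mono reach_finite) (use fB in \<open>auto simp: B'_def\<close>)
  also have "\<dots> \<le> 1 + card B'" using reach_card[of B' "{r}"] fB by (simp add: B'_def)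
  also have "card B' = card B - 1" using yx fB by (simp add: B'_def)
  finally have "card W \<le> 1 + (card B - 1)" .
  moreover have "card B > 0" using yx fB card_gt_0_iff by blast
  ultimately show False using cB by linarith
qed



lemma cycle_arcs_iff: "(a,b) \<in> cycle_arcs c \<longleftrightarrow> (\<exists>k<length c. a = c!k \<and> b = c!(Suc k mod length c))"
  by (auto simp: cycle_arcs_def)

locale cyc =
  fixes cs :: "nat list list" and ms :: "nat list" and t v :: nat and B :: "(nat \<times> nat) set"
  assumes len: "length cs = t" and lenms: "length ms = t"
    and P: "\<forall>i<t. length (cs!i) = ms!i \<and> distinct (cs!i) \<and> hd (cs!i) = v"
    and ms2: "\<forall>i<t. 2 \<le> ms!i"
    and disj: "\<forall>i<t. \<forall>j<t. i \<noteq> j \<longrightarrow> set (cs!i) \<inter> set (cs!j) = {v}"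
    and Bdef: "B = (\<Union>i<t. cycle_arcs (cs!i))"
begin

lemma L: "i < t \<Longrightarrow> length (cs!i) = ms!i" "i < t \<Longrightarrow> 2 \<le> length (cs!i)" "i < t \<Longrightarrow> distinct (cs!i)"
  using P ms2 by auto

lemma nth0: "i < t \<Longrightarrow> cs!i!0 = v"
proof -
  assume i: "i < t"
  have "cs!i \<noteq> []" using L(2)[OF i] by auto
  then show ?thesis using P i hd_conv_nth[of "cs!i"] by simp
qed

lemma nth1_ne: "i < t \<Longrightarrow> cs!i!1 \<noteq> v"
proof -
  assume i: "i < t"
  have "(cs!i!1 = cs!i!0) = (1 = (0::nat))"
    using L(2)[OF i] by (intro nth_eq_iff_index_eq[OF L(3)[OF i]]) auto
  then show ?thesis using nth0[OF i] by simp
qed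

lemma nth1_mem: "i < t \<Longrightarrow> cs!i!1 \<in> set (cs!i)"
  using L(2)[of i] by (intro nth_mem) simp

lemma nth1_inj: "i < t \<Longrightarrow> j < t \<Longrightarrow> cs!i!1 = cs!j!1 \<Longrightarrow> i = j"
proof (rule ccontr)
  assume ij: "i < t" "j < t" "cs!i!1 = cs!j!1" "i \<noteq> j"
  have "cs!i!1 \<in> set (cs!i)" "cs!i!1 \<in> set (cs!j)" using nth1_mem[OF ij(1)] nth1_mem[OF ij(2)] ij(3) by auto
  then have "cs!i!1 \<in> set (cs!i) \<inter> set (cs!j)" by simp
  then have "cs!i!1 = v" using disj ij by blast
  then show False using nth1_ne ij by simp
qed

lemma B_iff: "(a,b) \<in> B \<longleftrightarrow> (\<exists>i<t. \<exists>k<length (cs!i). a = cs!i!k \<and> b = cs!i!(Suc k mod length (cs!i)))"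
  unfolding Bdef by (auto simp: cycle_arcs_iff)

lemma out_v: "{j. (v,j) \<in> B} = (\<lambda>i. cs!i!1) ` {..<t}"
proof (intro equalityI subsetI)
  fix y assume "y \<in> {j. (v,j) \<in> B}"
  then obtain i k where ik: "i < t" "k < length (cs!i)" "v = cs!i!k" "y = cs!i!(Suc k mod length (cs!i))"
    using B_iff by auto
  have "(cs!i!k = cs!i!0) = (k = 0)"
    using ik L(2)[OF ik(1)] by (intro nth_eq_iff_index_eq[OF L(3)[OF ik(1)]]) auto
  then have "k = 0" using ik nth0[OF ik(1)] by simp
  then have "y = cs!i!1" using ik L(2)[of i] by simp
  then show "y \<in> (\<lambda>i. cs!i!1) ` {..<t}" using ik by auto
next
  fix y assume "y \<in> (\<lambda>i. cs!i!1) ` {..<t}"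
  then obtain i where i: "i < t" "y = cs!i!1" by auto
  have "(cs!i!0, cs!i!(Suc 0 mod length (cs!i))) \<in> B"
    unfolding B_iff by (intro exI[of _ i] conjI exI[of _ "0::nat"]) (use i L(2)[of i] in auto)
  then show "y \<in> {j. (v,j) \<in> B}" using i L(2)[of i] nth0[of i] by simp
qed

lemma card_out_v: "card {j. (v,j) \<in> B} = t"
proof -
  have "inj_on (\<lambda>i. cs!i!1) {..<t}" using nth1_inj by (auto simp: inj_on_def)
  then show ?thesis unfolding out_v by (simp add: card_image)
qed

lemma out_other:
  assumes x: "x \<in> set (cs!i)" "i < t" "x \<noteq> v"
  shows "card {j. (x,j) \<in> B} = 1"
proof -
  obtain k0 where k0: "k0 < length (cs!i)" "x = cs!i!k0" using x by (metis in_set_conv_nth)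
  have "{j. (x,j) \<in> B} = {cs!i!(Suc k0 mod length (cs!i))}"
  proof (intro equalityI subsetI)
    fix y assume "y \<in> {j. (x,j) \<in> B}"
    then obtain i' k where ik: "i' < t" "k < length (cs!i')" "x = cs!i'!k" "y = cs!i'!(Suc k mod length (cs!i'))"
      using B_iff by auto
    have "i' = i"
    proof (rule ccontr)
      assume "i' \<noteq> i"
      then have "set (cs!i') \<inter> set (cs!i) = {v}" using disj ik x by blast
      moreover have "x \<in> set (cs!i')" using ik by simp
      ultimately show False using x by blast
    qed
    then have "(cs!i!k = cs!i!k0) = (k = k0)"
      using ik k0 by (intro nth_eq_iff_index_eq[OF L(3)[OF x(2)]]) auto
    then have "k = k0" using ik k0 \<open>i' = i\<close> by simp
    then show "y \<in> {cs!i!(Suc k0 mod length (cs!i))}" using ik \<open>i' = i\<close> by simp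
  next
    fix y assume "y \<in> {cs!i!(Suc k0 mod length (cs!i))}"
    then show "y \<in> {j. (x,j) \<in> B}" using B_iff k0 x by auto
  qed
  then show ?thesis by simp
qed

lemma mod2_lemma:
  fixes k L :: nat
  assumes "k < L" "2 \<le> L" "Suc (Suc k) mod L = k"
  shows "L = 2"
proof (cases "Suc (Suc k) < L")
  case True then show ?thesis using assms by simp
next
  case False
  then have "Suc (Suc k) mod L = (Suc (Suc k) - L) mod L" by (simp add: le_mod_geq)
  also have "\<dots> = Suc (Suc k) - L" using assms by (intro mod_less) linarith
  finally have "Suc (Suc k) mod L = Suc (Suc k) - L" .
  then show ?thesis using assms False by linarith
qed

lemma digons:
  assumes noloop: "\<forall>x. (x,x) \<notin> B"
  shows "{p\<in>B. (snd p, fst p) \<in> B} = (\<Union>i\<in>{i. i < t \<and> ms!i = 2}. {(v, cs!i!1), (cs!i!1, v)})"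
proof (intro equalityI subsetI)
  fix p assume p: "p \<in> {p\<in>B. (snd p, fst p) \<in> B}"
  obtain a b where ab: "p = (a,b)" by (cases p)
  from p ab obtain i k where ik: "i < t" "k < length (cs!i)" "a = cs!i!k" "b = cs!i!(Suc k mod length (cs!i))"
    using B_iff by auto
  from p ab obtain j l where jl: "j < t" "l < length (cs!j)" "b = cs!j!l" "a = cs!j!(Suc l mod length (cs!j))"
    using B_iff by auto
  have "Suc k mod length (cs!i) < length (cs!i)" by (rule mod_less_divisor) (use ik(2) in linarith)
  then have ai: "a \<in> set (cs!i)" "b \<in> set (cs!i)" using ik nth_mem by auto
  have "Suc l mod length (cs!j) < length (cs!j)" by (rule mod_less_divisor) (use jl(2) in linarith)
  then have aj: "a \<in> set (cs!j)" "b \<in> set (cs!j)" using jl nth_mem by auto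
  have ij: "i = j"
  proof (rule ccontr)
    assume "i \<noteq> j"
    then have "set (cs!i) \<inter> set (cs!j) = {v}" using disj ik jl by blast
    then have "a = v" "b = v" using ai aj by blast+
    then show False using p ab noloop by auto
  qed
  define c where "c = cs!i"
  define Lc where "Lc = length c"
  have Lc2: "2 \<le> Lc" using L(2)[OF ik(1)] c_def Lc_def by simp
  have dc: "distinct c" using L(3)[OF ik(1)] c_def by simp
  have Lp: "0 < Lc" using Lc2 by simp
  have "(c!l = c!(Suc k mod Lc)) = (l = Suc k mod Lc)"
    using jl ij Lp c_def Lc_def by (intro nth_eq_iff_index_eq[OF dc]) auto
  then have l: "l = Suc k mod Lc" using ik jl ij c_def Lc_def by simp
  have "(c!k = c!(Suc l mod Lc)) = (k = Suc l mod Lc)"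
    using ik Lp c_def Lc_def by (intro nth_eq_iff_index_eq[OF dc]) auto
  then have k: "k = Suc l mod Lc" using ik jl ij c_def Lc_def by simp
  have "Suc (Suc k) mod Lc = k" using k l by (simp add: mod_Suc_eq)
  then have L2: "Lc = 2" using mod2_lemma ik(2) Lc2 c_def Lc_def by simp
  then have msi: "ms!i = 2" using L(1)[OF ik(1)] c_def Lc_def by simp
  have "k = 0 \<or> k = 1" using ik(2) L2 c_def Lc_def by auto
  then have "p = (v, cs!i!1) \<or> p = (cs!i!1, v)"
    using ab ik L2 c_def Lc_def nth0[OF ik(1)] by auto
  then show "p \<in> (\<Union>i\<in>{i. i < t \<and> ms!i = 2}. {(v, cs!i!1), (cs!i!1, v)})"
    using ik(1) msi by blast
next
  fix p assume "p \<in> (\<Union>i\<in>{i. i < t \<and> ms!i = 2}. {(v, cs!i!1), (cs!i!1, v)})"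
  then obtain i where i: "i < t" "ms!i = 2" and p: "p = (v, cs!i!1) \<or> p = (cs!i!1, v)" by blast
  have l2: "length (cs!i) = 2" using i L(1) by simp
  have a1: "(cs!i!0, cs!i!(Suc 0 mod length (cs!i))) \<in> B" unfolding B_iff by (intro exI[of _ i] conjI exI[of _ "0::nat"]) (use i l2 in auto)
  have a2: "(cs!i!1, cs!i!(Suc 1 mod length (cs!i))) \<in> B" unfolding B_iff by (intro exI[of _ i] conjI exI[of _ "1::nat"]) (use i l2 in auto)
  have "(v, cs!i!1) \<in> B" "(cs!i!1, v) \<in> B" using a1 a2 l2 nth0[OF i(1)] by simp_all
  then show "p \<in> {p\<in>B. (snd p, fst p) \<in> B}" using p by auto
qed

lemma card_digons:
  assumes noloop: "\<forall>x. (x,x) \<notin> B"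
  shows "card {p\<in>B. (snd p, fst p) \<in> B} = 2 * card {i. i < t \<and> ms!i = 2}"
proof -
  let ?I = "{i. i < t \<and> ms!i = 2}"
  have "card (\<Union>i\<in>?I. {(v, cs!i!1), (cs!i!1, v)}) = (\<Sum>i\<in>?I. card {(v, cs!i!1), (cs!i!1, v)})"
  proof (rule card_UN_disjoint)
    show "finite ?I" by simp
    show "\<forall>i\<in>?I. finite {(v, cs!i!1), (cs!i!1, v)}" by simp
    show "\<forall>i\<in>?I. \<forall>j\<in>?I. i \<noteq> j \<longrightarrow> {(v, cs!i!1), (cs!i!1, v)} \<inter> {(v, cs!j!1), (cs!j!1, v)} = {}"
      using nth1_inj nth1_ne by auto
  qed
  also have "\<dots> = (\<Sum>i\<in>?I. 2)" using nth1_ne by (intro sum.cong) auto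
  finally show ?thesis using digons[OF noloop] by simp
qed

lemma v_in: "0 < t \<Longrightarrow> v \<in> (\<Union>i<t. set (cs!i))"
proof -
  assume t: "0 < t"
  have "0 < length (cs!0)" using L(2)[OF t] by linarith
  then have "cs!0!0 \<in> set (cs!0)" by (rule nth_mem)
  then show ?thesis using nth0[OF t] t by auto
qed

lemma B_sub: "B \<subseteq> (\<Union>i<t. set (cs!i)) \<times> (\<Union>i<t. set (cs!i))"
proof
  fix p assume "p \<in> B"
  then obtain i k where ik: "i < t" "k < length (cs!i)" "fst p = cs!i!k" "snd p = cs!i!(Suc k mod length (cs!i))"
    using B_iff[of "fst p" "snd p"] by auto
  have "Suc k mod length (cs!i) < length (cs!i)" by (rule mod_less_divisor) (use ik(2) in linarith)
  then have "fst p \<in> set (cs!i)" "snd p \<in> set (cs!i)" using ik nth_mem by auto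
  then show "p \<in> (\<Union>i<t. set (cs!i)) \<times> (\<Union>i<t. set (cs!i))" using ik(1) by (cases p) auto
qed

end


lemma card_pairs_nat:
  fixes n :: nat
  assumes "X \<subseteq> {0..<n} \<times> {0..<n}"
  shows "card X = (\<Sum>i\<in>{0..<n}. card {j. (i,j) \<in> X})"
proof -
  have X: "X = (SIGMA i:{0..<n}. {j. (i,j) \<in> X})" using assms by auto
  have fin: "\<And>i. finite {j. (i,j) \<in> X}"
  proof -
    fix i have "{j. (i,j) \<in> X} \<subseteq> {0..<n}" using assms by auto
    then show "finite {j. (i,j) \<in> X}" using finite_subset by blast
  qed
  have "card (SIGMA i:{0..<n}. {j. (i,j) \<in> X}) = (\<Sum>i\<in>{0..<n}. card {j. (i,j) \<in> X})"
    by (rule card_SigmaI) (use fin in auto)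
  then show ?thesis using X by metis
qed

theorem corollary3p10:
  fixes \<alpha> :: real and ms :: "nat list" and s t n m v :: nat
    and A :: "(nat \<times> nat) set" and S :: "nat set" and T :: "nat \<Rightarrow> nat set"
  assumes "0 \<le> \<alpha>" and "\<alpha> < 1"
    and "t = length ms" and "2 \<le> t"
    and "sorted ms" and "\<forall>i<t. 2 \<le> ms ! i"
    and "s = card {i. i < t \<and> ms ! i = 2}"
    and "m = sum_list ms - t + 1"
    and "in_class_G n m A S T"
    and "is_infty_digraph ms v S (A \<inter> S \<times> S)"
  shows "let E = Re (E_alpha \<alpha> n A);
             lower = \<alpha>\<^sup>2 * (real m - 1 + (real t)\<^sup>2) + \<alpha>\<^sup>2 * (real n - real m) + 2 * real s * (1 - \<alpha>)\<^sup>2;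
             upper = \<alpha>\<^sup>2 * (real n - real m + real t)\<^sup>2 + \<alpha>\<^sup>2 * (real m - 1) + 2 * real s * (1 - \<alpha>)\<^sup>2
         in lower \<le> E \<and> E \<le> upper \<and>
            (0 < \<alpha> \<longrightarrow>
               (E = lower \<longleftrightarrow> (\<forall>u\<in>S. in_tree_rooted (T u) (A \<inter> T u \<times> T u) u)) \<and>
               (E = upper \<longleftrightarrow> A - S \<times> S = {v} \<times> ({0..<n} - S)))"
proof -
  define V where "V = {0..<n}"
  from assms(9) have dg: "digraph n A" and m2: "2 \<le> m" and mn: "m \<le> n" and SV: "S \<subseteq> V"
    and cS: "card S = m"
    and trees: "\<forall>u\<in>S. directed_tree (T u) (A \<inter> T u \<times> T u) \<and> T u \<inter> S = {u}"
    and tdisj: "\<forall>u\<in>S. \<forall>w\<in>S. u \<noteq> w \<longrightarrow> T u \<inter> T w = {}"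
    and cover: "(\<Union>u\<in>S. T u) = V"
    and Adec: "A = (A \<inter> S \<times> S) \<union> (\<Union>u\<in>S. A \<inter> T u \<times> T u)"
    unfolding in_class_G_def V_def by auto
  have AV: "A \<subseteq> V \<times> V" and noloop: "\<forall>x. (x,x) \<notin> A" using dg by (auto simp: digraph_def V_def)
  have fV: "finite V" by (simp add: V_def)
  have fA: "finite A" using AV fV by (meson finite_SigmaI finite_subset)
  have fS: "finite S" using SV fV finite_subset by blast
  from assms(10) obtain cs where cs1: "length cs = length ms"
    and cs2: "\<forall>i<length ms. length (cs ! i) = ms ! i \<and> distinct (cs ! i) \<and> hd (cs ! i) = v"
    and cs3: "\<forall>i<length ms. \<forall>j<length ms. i \<noteq> j \<longrightarrow> set (cs ! i) \<inter> set (cs ! j) = {v}"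
    and cs4: "S = (\<Union>i<length ms. set (cs ! i))"
    and cs5: "A \<inter> S \<times> S = (\<Union>i<length ms. cycle_arcs (cs ! i))"
    unfolding is_infty_digraph_def by blast
  interpret C: cyc cs ms t v "A \<inter> S \<times> S"
    by unfold_locales (use cs1 cs2 cs3 cs5 assms(3,6) in auto)
  define B where "B = A \<inter> S \<times> S"
  define R where "R = A - S \<times> S"
  define c where "c x = card {j. (x,j) \<in> B}" for x
  define e where "e x = card {j. (x,j) \<in> R}" for x
  have t0: "0 < t" using assms(4) by simp
  have vS: "v \<in> S" using C.v_in[OF t0] assms(3) cs4 by simp
  have cv: "c v = t" using C.card_out_v c_def B_def by simp
  have c1: "\<forall>x\<in>S-{v}. c x = 1"
  proof
    fix x assume x: "x \<in> S - {v}"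
    then obtain i where "i < t" "x \<in> set (cs!i)" using cs4 assms(3) by auto
    then have "card {j. (x,j) \<in> A \<inter> S \<times> S} = 1" using C.out_other x by blast
    then show "c x = 1" unfolding c_def B_def .
  qed
  have c0: "\<forall>x\<in>V-S. c x = 0"
  proof
    fix x assume "x \<in> V - S"
    then have "{j. (x,j) \<in> B} = {}" by (auto simp: B_def)
    then show "c x = 0" by (simp add: c_def)
  qed
  have deg: "\<And>x. outdeg A x = c x + e x"
  proof -
    fix x
    have eq: "{j. (x,j) \<in> A} = {j. (x,j) \<in> B} \<union> {j. (x,j) \<in> R}" by (auto simp: B_def R_def)
    have f1: "finite {j. (x,j) \<in> B}" by (rule finite_subset[of _ V]) (use AV fV in \<open>auto simp: B_def\<close>)
    have f2: "finite {j. (x,j) \<in> R}" by (rule finite_subset[of _ V]) (use AV fV in \<open>auto simp: R_def\<close>)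
    have "card ({j. (x,j) \<in> B} \<union> {j. (x,j) \<in> R}) = c x + e x"
      unfolding c_def e_def by (rule card_Un_disjoint[OF f1 f2]) (auto simp: B_def R_def)
    then show "outdeg A x = c x + e x" by (simp add: outdeg_def eq)
  qed
  have uT: "\<forall>u\<in>S. u \<in> T u" using trees by blast
  have TV: "\<forall>u\<in>S. T u \<subseteq> V" using cover by blast
  have Tfin: "\<forall>u\<in>S. finite (T u)" using trees unfolding directed_tree_def by blast
  have Rdec: "R = (\<Union>u\<in>S. A \<inter> T u \<times> T u)"
  proof (intro equalityI subsetI)
    fix p assume "p \<in> R"
    then show "p \<in> (\<Union>u\<in>S. A \<inter> T u \<times> T u)" using Adec unfolding R_def by blast
  next
    fix p assume "p \<in> (\<Union>u\<in>S. A \<inter> T u \<times> T u)"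
    then obtain u a b where u: "u \<in> S" "p = (a,b)" "(a,b) \<in> A" "a \<in> T u" "b \<in> T u" by auto
    have "(a,b) \<notin> S \<times> S"
    proof
      assume "(a,b) \<in> S \<times> S"
      then have "a = u" "b = u" using u trees by blast+
      then show False using u noloop by simp
    qed
    then show "p \<in> R" using u by (simp add: R_def)
  qed
  have Rx: "\<And>u x. u \<in> S \<Longrightarrow> x \<in> T u \<Longrightarrow> {j. (x,j) \<in> A \<inter> T u \<times> T u} = {j. (x,j) \<in> R}"
  proof -
    fix u x assume u: "u \<in> S" and x: "x \<in> T u"
    show "{j. (x,j) \<in> A \<inter> T u \<times> T u} = {j. (x,j) \<in> R}"
    proof (intro equalityI subsetI)
      fix j assume "j \<in> {j. (x,j) \<in> A \<inter> T u \<times> T u}"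
      then show "j \<in> {j. (x,j) \<in> R}" using Rdec u by blast
    next
      fix j assume "j \<in> {j. (x,j) \<in> R}"
      then obtain u' where u': "u' \<in> S" "(x,j) \<in> A \<inter> T u' \<times> T u'" using Rdec by blast
      have "u' = u" using tdisj u u' x by blast
      then show "j \<in> {j. (x,j) \<in> A \<inter> T u \<times> T u}" using u' by simp
    qed
  qed
  have xT: "\<forall>x\<in>V. \<exists>u\<in>S. x \<in> T u" using cover by blast
  have RV: "R \<subseteq> V \<times> V" using AV by (auto simp: R_def)
  have cardR: "card R + m = n"
  proof -
    have "card R = (\<Sum>u\<in>S. card (A \<inter> T u \<times> T u))"
      unfolding Rdec
    proof (rule card_UN_disjoint[OF fS])
      show "\<forall>u\<in>S. finite (A \<inter> T u \<times> T u)" using fA by simp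
      show "\<forall>u\<in>S. \<forall>w\<in>S. u \<noteq> w \<longrightarrow> (A \<inter> T u \<times> T u) \<inter> (A \<inter> T w \<times> T w) = {}"
        using tdisj by blast
    qed
    also have "\<dots> = (\<Sum>u\<in>S. card (T u) - 1)"
    proof (rule sum.cong[OF refl])
      fix u assume "u \<in> S"
      then have "card (A \<inter> T u \<times> T u) + 1 = card (T u)" using trees unfolding directed_tree_def by blast
      then show "card (A \<inter> T u \<times> T u) = card (T u) - 1" by simp
    qed
    finally have "card R + m = (\<Sum>u\<in>S. card (T u) - 1) + (\<Sum>u\<in>S. 1)" using cS by simp
    also have "\<dots> = (\<Sum>u\<in>S. card (T u))"
    proof -
      have "\<forall>u\<in>S. card (T u) \<ge> 1" using uT Tfin by (metis card_0_eq empty_iff less_one not_le)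
      have "(\<Sum>u\<in>S. card (T u) - 1) + (\<Sum>u\<in>S. 1) = (\<Sum>u\<in>S. card (T u) - 1 + 1)"
        by (rule sum.distrib[symmetric])
      also have "\<dots> = (\<Sum>u\<in>S. card (T u))" using \<open>\<forall>u\<in>S. card (T u) \<ge> 1\<close> by (intro sum.cong) auto
      finally show ?thesis .
    qed
    also have "\<dots> = card (\<Union>u\<in>S. T u)"
      by (rule card_UN_disjoint[symmetric, OF fS]) (use Tfin tdisj in auto)
    also have "\<dots> = n" using cover by (simp add: V_def)
    finally show ?thesis .
  qed
  have sumE: "(\<Sum>x\<in>V. e x) = card R"
    unfolding e_def V_def by (rule card_pairs_nat[symmetric]) (use RV in \<open>simp add: V_def\<close>)
  have digon: "card {p\<in>A. (snd p, fst p) \<in> A} = 2 * s"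
  proof -
    have "{p\<in>A. (snd p, fst p) \<in> A} = {p\<in>A \<inter> S \<times> S. (snd p, fst p) \<in> A \<inter> S \<times> S}"
    proof (intro equalityI subsetI)
      fix p assume p: "p \<in> {p\<in>A. (snd p, fst p) \<in> A}"
      obtain a b where ab: "p = (a,b)" by (cases p)
      show "p \<in> {p\<in>A \<inter> S \<times> S. (snd p, fst p) \<in> A \<inter> S \<times> S}"
      proof (cases "p \<in> S \<times> S")
        case True then show ?thesis using p by auto
      next
        case False
        then have "p \<in> R" using p by (simp add: R_def)
        then obtain u where u: "u \<in> S" "(a,b) \<in> A \<inter> T u \<times> T u" using Rdec ab by blast
        have ba: "(b,a) \<in> A" using p ab by simp
        have "(b,a) \<notin> S \<times> S" using False ab by auto
        then have "(b,a) \<in> R" using ba by (simp add: R_def)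
        then obtain u' where u': "u' \<in> S" "(b,a) \<in> A \<inter> T u' \<times> T u'" using Rdec by blast
        have "u' = u" using tdisj u u' by blast
        then show ?thesis using tree_no_digon[of "T u" "A \<inter> T u \<times> T u" a b] trees u u' by auto
      qed
    qed auto
    then show ?thesis using C.card_digons noloop assms(7) by simp
  qed
  define Q where "Q = (\<Sum>x\<in>V. (c x + e x)^2)"
  define K where "K = (\<Sum>x\<in>V. e x)"
  have Kn: "K = n - m" using sumE cardR K_def by simp
  define h where "h x = 2 * c x * e x + e x * (e x - 1)" for x
  define H where "H = (\<Sum>x\<in>V. h x)"
  have QL: "Q = t^2 + (m - 1) + K + H"
    unfolding Q_def K_def H_def h_def
    by (rule arith_lower[OF fV SV vS cS cv c1 c0 assms(4)])
  have QU: "Q \<le> (K + t)^2 + (m - 1)" "Q = (K + t)^2 + (m - 1) \<longleftrightarrow> e v = K"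
    unfolding Q_def K_def by (rule arith_upper[OF fV SV vS cS cv c1 c0 assms(4)])+
  have MA: "A_alpha \<alpha> n A \<in> carrier_mat n n" by (simp add: A_alpha_def)
  have Eeq: "Re (E_alpha \<alpha> n A) = \<alpha>^2 * real Q + (1-\<alpha>)^2 * (2 * real s)"
  proof -
    have "E_alpha \<alpha> n A = trsq n (A_alpha \<alpha> n A)"
      unfolding E_alpha_def by (rule sum_roots_sq[OF MA])
    also have "\<dots> = complex_of_real (\<alpha>^2 * (\<Sum>i<n. (real (outdeg A i))^2)
           + (1-\<alpha>)^2 * real (card {p\<in>A. (snd p, fst p)\<in>A}))"
      by (rule trsq_A_alpha[OF dg])
    also have "(\<Sum>i<n. (real (outdeg A i))^2) = real Q"
      unfolding Q_def V_def deg by (simp add: lessThan_atLeast0)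
    finally show ?thesis using digon by simp
  qed
  have Kr: "real n - real m = real K" using Kn mn by simp
  have mr: "real m - 1 = real (m - 1)" using m2 by simp
  have RQ: "real Q = (real t)^2 + real (m - 1) + real K + real H" using QL by simp
  have lowEq: "Re (E_alpha \<alpha> n A) = (\<alpha>\<^sup>2 * (real m - 1 + (real t)\<^sup>2) + \<alpha>\<^sup>2 * (real n - real m) + 2 * real s * (1 - \<alpha>)\<^sup>2) + \<alpha>^2 * real H"
    unfolding Eeq RQ Kr mr by (simp add: algebra_simps)
  have upEq: "\<alpha>\<^sup>2 * (real n - real m + real t)\<^sup>2 + \<alpha>\<^sup>2 * (real m - 1) + 2 * real s * (1 - \<alpha>)\<^sup>2
      = \<alpha>^2 * real ((K + t)^2 + (m - 1)) + (1-\<alpha>)^2 * (2 * real s)"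
    unfolding Kr mr by (simp add: algebra_simps)
  have QUr: "real Q \<le> real ((K + t)^2 + (m - 1))" using QU(1) by linarith
  have cpos: "\<And>x. x \<in> V \<Longrightarrow> c x = 0 \<longleftrightarrow> x \<notin> S"
  proof -
    fix x assume x: "x \<in> V"
    show "c x = 0 \<longleftrightarrow> x \<notin> S"
    proof (cases "x \<in> S")
      case True
      then show ?thesis using cv c1 assms(4) by (cases "x = v") auto
    next
      case False then show ?thesis using c0 x by auto
    qed
  qed
  have H0: "H = 0 \<longleftrightarrow> (\<forall>x\<in>V. (x \<in> S \<longrightarrow> e x = 0) \<and> e x \<le> 1)"
  proof -
    have "H = 0 \<longleftrightarrow> (\<forall>x\<in>V. h x = 0)" unfolding H_def using fV by simp
    also have "\<dots> \<longleftrightarrow> (\<forall>x\<in>V. (x \<in> S \<longrightarrow> e x = 0) \<and> e x \<le> 1)"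
    proof (intro ball_cong refl)
      fix x assume x: "x \<in> V"
      have "h x = 0 \<longleftrightarrow> c x * e x = 0 \<and> e x * (e x - 1) = 0" by (simp add: h_def)
      also have "e x * (e x - 1) = 0 \<longleftrightarrow> e x \<le> 1" by auto
      also have "c x * e x = 0 \<longleftrightarrow> (x \<in> S \<longrightarrow> e x = 0)" using cpos[OF x] by auto
      finally show "h x = 0 \<longleftrightarrow> (x \<in> S \<longrightarrow> e x = 0) \<and> e x \<le> 1" .
    qed
    finally show ?thesis .
  qed
  have outTu: "\<And>u x. u \<in> S \<Longrightarrow> x \<in> T u \<Longrightarrow> outdeg (A \<inter> T u \<times> T u) x = e x"
    unfolding outdeg_def e_def using Rx by simp
  have treeEq: "(\<forall>u\<in>S. in_tree_rooted (T u) (A \<inter> T u \<times> T u) u) \<longleftrightarrow> H = 0"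
  proof
    assume it: "\<forall>u\<in>S. in_tree_rooted (T u) (A \<inter> T u \<times> T u) u"
    show "H = 0" unfolding H0
    proof
      fix x assume x: "x \<in> V"
      then obtain u where u: "u \<in> S" "x \<in> T u" using xT by blast
      have "e x \<le> 1" using it u outTu[OF u] unfolding in_tree_rooted_def by fastforce
      moreover have "x \<in> S \<longrightarrow> e x = 0"
      proof
        assume "x \<in> S"
        then have "x = u" using u trees by blast
        then show "e x = 0" using it u outTu[OF u] unfolding in_tree_rooted_def by fastforce
      qed
      ultimately show "(x \<in> S \<longrightarrow> e x = 0) \<and> e x \<le> 1" by simp
    qed
  next
    assume "H = 0"
    then have hx: "\<forall>x\<in>V. (x \<in> S \<longrightarrow> e x = 0) \<and> e x \<le> 1" using H0 by simp
    show "\<forall>u\<in>S. in_tree_rooted (T u) (A \<inter> T u \<times> T u) u"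
    proof
      fix u assume u: "u \<in> S"
      have "directed_tree (T u) (A \<inter> T u \<times> T u)" using trees u by blast
      moreover have "u \<in> T u" using uT u by blast
      moreover have "\<forall>x\<in>T u. outdeg (A \<inter> T u \<times> T u) x \<le> 1"
      proof
        fix x assume x: "x \<in> T u"
        then have "x \<in> V" using TV u by blast
        then show "outdeg (A \<inter> T u \<times> T u) x \<le> 1" using hx outTu[OF u x] by simp
      qed
      moreover have "outdeg (A \<inter> T u \<times> T u) u = 0"
      proof -
        have "u \<in> V" "u \<in> T u" using SV u uT by auto
        then show ?thesis using hx outTu[OF u] u by simp
      qed
      ultimately show "in_tree_rooted (T u) (A \<inter> T u \<times> T u) u" unfolding in_tree_rooted_def by blast
    qed
  qed
  have cardVS: "card (V - S) = K" using Kn cS SV fS by (simp add: card_Diff_subset V_def)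
  have Rfin: "\<And>x. finite {j. (x,j) \<in> R}"
    by (rule finite_subset[of _ V]) (use RV fV in auto)
  have upEq2: "e v = K \<longleftrightarrow> R = {v} \<times> (V - S)"
  proof
    assume evK: "e v = K"
    have oth: "\<forall>x\<in>V-{v}. e x = 0"
    proof -
      have vV: "v \<in> V" using vS SV by auto
      have "K = e v + (\<Sum>x\<in>V-{v}. e x)" unfolding K_def using fV vV by (simp add: sum.remove)
      then have "(\<Sum>x\<in>V-{v}. e x) = 0" using evK by simp
      then show ?thesis using fV by simp
    qed
    have Rsub: "R \<subseteq> {v} \<times> (V - S)"
    proof
      fix p assume p: "p \<in> R"
      obtain a b where ab: "p = (a,b)" by (cases p)
      have aV: "a \<in> V" "b \<in> V" using p ab RV by auto
      have "a = v"
      proof (rule ccontr)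
        assume "a \<noteq> v"
        then have "e a = 0" using oth aV by simp
        then have "{j. (a,j) \<in> R} = {}" using Rfin[of a] by (simp add: e_def)
        then show False using p ab by auto
      qed
      moreover have "b \<notin> S" using p ab \<open>a = v\<close> vS by (auto simp: R_def)
      ultimately show "p \<in> {v} \<times> (V - S)" using ab aV by simp
    qed
    have J: "{j. (v,j) \<in> R} = V - S"
    proof (rule card_subset_eq)
      show "finite (V - S)" using fV by simp
      show "{j. (v,j) \<in> R} \<subseteq> V - S" using Rsub by auto
      show "card {j. (v,j) \<in> R} = card (V - S)" using evK cardVS by (simp add: e_def)
    qed
    show "R = {v} \<times> (V - S)"
    proof (intro equalityI subsetI)
      fix p assume "p \<in> R" then show "p \<in> {v} \<times> (V - S)" using Rsub by blast
    next
      fix p assume "p \<in> {v} \<times> (V - S)"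
      then show "p \<in> R" using J by auto
    qed
  next
    assume "R = {v} \<times> (V - S)"
    then have "{j. (v,j) \<in> R} = V - S" by auto
    then show "e v = K" using cardVS by (simp add: e_def)
  qed
  have a2: "0 \<le> \<alpha>^2" by simp
  show ?thesis
    unfolding Let_def
  proof (intro conjI impI)
    show "\<alpha>\<^sup>2 * (real m - 1 + (real t)\<^sup>2) + \<alpha>\<^sup>2 * (real n - real m) + 2 * real s * (1 - \<alpha>)\<^sup>2 \<le> Re (E_alpha \<alpha> n A)"
      unfolding lowEq using a2 by simp
    show "Re (E_alpha \<alpha> n A) \<le> \<alpha>\<^sup>2 * (real n - real m + real t)\<^sup>2 + \<alpha>\<^sup>2 * (real m - 1) + 2 * real s * (1 - \<alpha>)\<^sup>2"
      unfolding upEq Eeq using QUr a2 by (simp add: mult_left_mono)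
  next
    assume ap: "0 < \<alpha>"
    then have a2p: "0 < \<alpha>^2" by simp
    show "(Re (E_alpha \<alpha> n A) = \<alpha>\<^sup>2 * (real m - 1 + (real t)\<^sup>2) + \<alpha>\<^sup>2 * (real n - real m) + 2 * real s * (1 - \<alpha>)\<^sup>2)
          \<longleftrightarrow> (\<forall>u\<in>S. in_tree_rooted (T u) (A \<inter> T u \<times> T u) u)"
      unfolding lowEq treeEq using a2p by simp
  next
    assume ap: "0 < \<alpha>"
    then have a2p: "0 < \<alpha>^2" by simp
    have "(Re (E_alpha \<alpha> n A) = \<alpha>\<^sup>2 * (real n - real m + real t)\<^sup>2 + \<alpha>\<^sup>2 * (real m - 1) + 2 * real s * (1 - \<alpha>)\<^sup>2)
          \<longleftrightarrow> real Q = real ((K + t)^2 + (m - 1))"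
      unfolding upEq Eeq using a2p by simp
    also have "\<dots> \<longleftrightarrow> Q = (K + t)^2 + (m - 1)" by (simp only: of_nat_eq_iff)
    also have "\<dots> \<longleftrightarrow> e v = K" by (rule QU(2))
    also have "\<dots> \<longleftrightarrow> A - S \<times> S = {v} \<times> ({0..<n} - S)" using upEq2 by (simp add: R_def V_def)
    finally show "(Re (E_alpha \<alpha> n A) = \<alpha>\<^sup>2 * (real n - real m + real t)\<^sup>2 + \<alpha>\<^sup>2 * (real m - 1) + 2 * real s * (1 - \<alpha>)\<^sup>2)
          \<longleftrightarrow> A - S \<times> S = {v} \<times> ({0..<n} - S)" .
  qed
qed

end
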